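(* Assume conditions (C1) and (C2) hold, and suppose $p_n\ge0$, $\mu_n\ge 0$ with $\sum_n p_n<\infty$. Let $\{w_n\},\{y_n\}$ be generated by Algorithm 3.1. If $\lim_{n\to\infty}\|w_n-y_n\|=0$ and $\{w_n\}$ converges weakly to some $z\in H$, then $z\in\Omega$.
   Context: Let $H$ be a real Hilbert space, $A:H\to H$ a single-valued mapping and $B:H\to 2^H$ a set-valued mapping, and let $\Omega:=(A+B)^{-1}(0)=\{x\in H:\ 0\in Ax+Bx\}$. Algorithm 3.1 is the following iteration. Fix $x_0,x_1\in H$, $\mu\in(0,1)$, $\lambda_1>0$, real sequences $\{\alpha_n\},\{\beta_n\},\{\theta_n\}$ and nonnegative real sequences $\{\mu_n\},\{p_n\}$. For $n=1,2,\dots$ compute $w_n=x_n+\alpha_n(x_n-x_{n-1})$, $z_n=x_n+\beta_n(x_n-x_{n-1})$, $y_n=(I+\lambda_nB)^{-1}(I-\lambda_nA)w_n$, and set $\lambda_{n+1}=\min\{(\mu_n+\mu)\|w_n-y_n\|/\|Aw_n-Ay_n\|,\ \lambda_n+p_n\}$ if $Aw_n\neq Ay_n$, and $\lambda_{n+1}=\lambda_n+p_n$ otherwise. If $w_n=y_n$ the algorithm stops (then $y_n\in\Omega$). Otherwise set $x_{n+1}=(1-\theta_n)z_n+\theta_n\big(y_n-\lambda_n(Ay_n-Aw_n)\big)$ and continue. Here $I$ is the identity and $(I+\lambda B)^{-1}$ is the resolvent of $B$. Throughout, it is assumed that the algorithm does not stop, so that infinite sequences $\{x_n\},\{w_n\},\{z_n\},\{y_n\},\{\lambda_n\}$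 are generated. Condition (C1): $\Omega\neq\emptyset$. Condition (C2): $A$ is $L$-Lipschitz continuous and monotone, and $B$ is maximal monotone. *)

theory Defs
  imports "HOL-Analysis.Analysis"
begin

text \<open>Real Hilbert space: type class real_inner together with complete_space.
Set-valued maps are modelled as functions into sets.\<close>

definition lipschitz_op :: "real \<Rightarrow> ('a::real_normed_vector \<Rightarrow> 'a) \<Rightarrow> bool" where
  "lipschitz_op L A \<longleftrightarrow> (\<forall>x y. norm (A x - A y) \<le> L * norm (x - y))"

definition monotone_op :: "('a::real_inner \<Rightarrow> 'a) \<Rightarrow> bool" where
  "monotone_op A \<longleftrightarrow> (\<forall>x y. (A x - A y) \<bullet> (x - y) \<ge> 0)"

definition monotone_setop :: "('a::real_inner \<Rightarrow> 'a set) \<Rightarrow> bool" where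
  "monotone_setop B \<longleftrightarrow> (\<forall>x y u v. u \<in> B x \<longrightarrow> v \<in> B y \<longrightarrow> (u - v) \<bullet> (x - y) \<ge> 0)"

definition maximal_monotone :: "('a::real_inner \<Rightarrow> 'a set) \<Rightarrow> bool" where
  "maximal_monotone B \<longleftrightarrow> monotone_setop B \<and>
     (\<forall>B'. monotone_setop B' \<and> (\<forall>x. B x \<subseteq> B' x) \<longrightarrow> B' = B)"

text \<open>Resolvent (I + lam B)^{-1} as the inverse of the set-valued operator I + lam B:
the set of all y with x \<in> y + lam B y.\<close>
definition resolvent :: "real \<Rightarrow> ('a::real_vector \<Rightarrow> 'a set) \<Rightarrow> 'a \<Rightarrow> 'a set" where
  "resolvent lam B x = {y. \<exists>b\<in>B y. x = y + lam *\<^sub>R b}"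

definition zeros_sum :: "('a::real_vector \<Rightarrow> 'a) \<Rightarrow> ('a \<Rightarrow> 'a set) \<Rightarrow> 'a set" where
  "zeros_sum A B = {x. \<exists>b\<in>B x. A x + b = 0}"

definition weakly_converges :: "(nat \<Rightarrow> 'a::real_inner) \<Rightarrow> 'a \<Rightarrow> bool" where
  "weakly_converges x z \<longleftrightarrow> (\<forall>v. (\<lambda>n. x n \<bullet> v) \<longlonglongrightarrow> z \<bullet> v)"

end

theory Submission imports Defs begin

lemma nconv:
  fixes a b :: "'a::real_inner"
  shows "norm((1-s)*\<^sub>R a + s*\<^sub>R b)^2 = (1-s)*norm a^2 + s*norm b^2 - s*(1-s)*norm(a-b)^2"
  by (simp add: power2_norm_eq_inner inner_add_left inner_add_right inner_diff_left inner_diff_right inner_commute algebra_simps)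

definition Qf :: "'a::real_inner \<times> 'a \<Rightarrow> 'a \<Rightarrow> 'a \<Rightarrow> real" where
  "Qf g x u = x \<bullet> snd g + fst g \<bullet> u - fst g \<bullet> snd g + (norm x ^2 + norm u ^2)/2"

lemma Qf_comb:
  fixes x1 :: "'a::real_inner"
  shows "Qf g ((1-s)*\<^sub>R x1 + s*\<^sub>R x2) ((1-s)*\<^sub>R u1 + s*\<^sub>R u2) =
    (1-s)* Qf g x1 u1 + s * Qf g x2 u2 - s*(1-s)*(norm(x1-x2)^2 + norm(u1-u2)^2)/2"
  unfolding Qf_def nconv
  apply (simp add: inner_add_left inner_add_right algebra_simps)
  apply (simp add: field_simps)
  done

lemma ident1:
  fixes y v x0 u0 :: "'a::real_inner"
  shows "norm(y+v)^2/2 - (norm(x0-y)^2+norm(u0-v)^2)/2 = (y + u0) \<bullet> (v + x0) - norm(x0+u0)^2/2"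
  apply (simp add: power2_norm_eq_inner inner_add_left inner_add_right inner_diff_left inner_diff_right inner_commute algebra_simps)
  apply (simp add: field_simps)
  done

lemma cauchy_helper:
  fixes X :: "nat \<Rightarrow> 'a::real_normed_vector"
  assumes D: "\<And>i j. norm (X i - X j)^2 \<le> 4*(inverse (real (Suc i)) + inverse (real (Suc j)))"
  shows "Cauchy X"
  unfolding Cauchy_def
proof (intro allI impI)
  fix e :: real assume e: "e > 0"
  obtain M :: nat where M: "8/e^2 < M" using reals_Archimedean2 by blast
  have Mpos: "real M > 0" using M e by (smt (verit) divide_pos_pos zero_less_power)
  have hM: "inverse (real M) < e^2/8"
  proof -
    have "8 < real M * e^2" using M e by (simp add: divide_less_eq)
    then show ?thesis using Mpos by (simp add: field_simps)
  qed
  show "\<exists>M. \<forall>m\<ge>M. \<forall>n\<ge>M. dist (X m) (X n) < e"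
  proof (intro exI allI impI)
    fix i j assume i: "M \<le> i" and j: "M \<le> j"
    have hi: "inverse (real (Suc i)) < e^2/8"
    proof -
      have "inverse (real (Suc i)) \<le> inverse (real M)" using i Mpos
        by (simp add: le_imp_inverse_le)
      also have "inverse (real M) < e^2/8" by (rule hM)
      finally show ?thesis .
    qed
    have hj: "inverse (real (Suc j)) < e^2/8"
    proof -
      have "inverse (real (Suc j)) \<le> inverse (real M)" using j Mpos
        by (simp add: le_imp_inverse_le)
      also have "inverse (real M) < e^2/8" by (rule hM)
      finally show ?thesis .
    qed
    have aux: "\<And>a b::real. a < e^2/8 \<Longrightarrow> b < e^2/8 \<Longrightarrow> 4*(a+b) < e^2" by argo
    have "4*(inverse (real (Suc i)) + inverse (real (Suc j))) < e^2" using aux[OF hi hj] .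
    then have "norm (X i - X j)^2 < e^2" using D[of i j] by linarith
    then have "norm (X i - X j) < e" using e by (simp add: power_less_imp_less_base)
    then show "dist (X i) (X j) < e" by (simp add: dist_norm)
  qed
qed

lemma minty_core:
  fixes G :: "('a::{real_inner,complete_space} \<times> 'a) set"
  assumes mono: "\<And>y v y' v'. (y,v)\<in>G \<Longrightarrow> (y',v')\<in>G \<Longrightarrow> (y - y') \<bullet> (v - v') \<ge> 0"
    and maxi: "\<And>a c. (\<And>y v. (y,v)\<in>G \<Longrightarrow> (y - a) \<bullet> (v - c) \<ge> 0) \<Longrightarrow> (a,c) \<in> G"
  shows "\<exists>a c. (a,c)\<in>G \<and> a + c = 0"
proof -
  have "G \<noteq> {}" using maxi[of 0 0] by auto
  then obtain y0 v0 where g0: "(y0,v0)\<in>G" by auto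
  have upper: "Qf g y' v' \<le> norm (y'+v')^2/2" if "g\<in>G" "(y',v')\<in>G" for g y' v'
  proof -
    obtain y v where g: "g=(y,v)" by (cases g)
    have "(y' - y) \<bullet> (v' - v) \<ge> 0" using mono that g by auto
    then show ?thesis unfolding g Qf_def
      by (simp add: power2_norm_eq_inner inner_add_left inner_add_right inner_diff_left inner_diff_right inner_commute algebra_simps) (simp add: field_simps)
  qed
  have lower: "\<exists>g\<in>G. Qf g x u \<ge> norm (x+u)^2/2" for x u
  proof (cases "(x,u)\<in>G")
    case True then show ?thesis
      by (intro bexI[of _ "(x,u)"]) (simp_all add: Qf_def power2_norm_eq_inner inner_add_left inner_add_right inner_commute algebra_simps)
  next
    case False
    then obtain y v where yv: "(y,v)\<in>G" "(y - x) \<bullet> (v - u) < 0" using maxi[of x u] by (meson not_le)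
    then show ?thesis
      by (intro bexI[of _ "(y,v)"]) (simp_all add: Qf_def power2_norm_eq_inner inner_add_left inner_add_right inner_diff_left inner_diff_right inner_commute algebra_simps, simp add: field_simps)
  qed
  define T where "T = {t. \<exists>x u. \<forall>g\<in>G. Qf g x u \<le> t}"
  have T_ne: "norm(y0+v0)^2/2 \<in> T" using upper g0 unfolding T_def by blast
  have T_nonneg: "t \<ge> 0" if tT: "t\<in>T" for t
  proof -
    obtain x u where xu: "\<forall>g\<in>G. Qf g x u \<le> t" using tT unfolding T_def by blast
    obtain g where "g\<in>G" "Qf g x u \<ge> norm (x+u)^2/2" using lower by blast
    then show ?thesis using xu by (smt (verit) zero_le_power2 divide_nonneg_pos)
  qed
  have bdd: "bdd_below T" by (meson T_nonneg bdd_below.I)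
  define m where "m = Inf T"
  have m_le: "m \<le> t" if "t\<in>T" for t using cInf_lower bdd that m_def by blast
  have m_nonneg: "m \<ge> 0" unfolding m_def using T_ne T_nonneg by (intro cInf_greatest) auto
  have "\<forall>k. \<exists>x u. \<forall>g\<in>G. Qf g x u \<le> m + inverse (real (Suc k))"
  proof
    fix k
    have "Inf T < m + inverse (real (Suc k))" unfolding m_def by simp
    then obtain t where "t\<in>T" "t < m + inverse (real (Suc k))"
      using cInf_less_iff[OF _ bdd] T_ne by blast
    then obtain x u where xu: "\<forall>g\<in>G. Qf g x u \<le> t" and tl: "t < m + inverse (real (Suc k))"
      unfolding T_def by blast
    have "\<forall>g\<in>G. Qf g x u \<le> m + inverse (real (Suc k))"
      using xu tl by (meson less_imp_le order_trans)
    then show "\<exists>x u. \<forall>g\<in>G. Qf g x u \<le> m + inverse (real (Suc k))" by blast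
  qed
  then obtain xs us where seq: "\<And>k g. g\<in>G \<Longrightarrow> Qf g (xs k) (us k) \<le> m + inverse (real (Suc k))"
    by metis
  have D: "norm (xs i - xs j)^2 + norm (us i - us j)^2 \<le> 4*(inverse (real (Suc i)) + inverse (real (Suc j)))" for i j
  proof -
    let ?D = "norm (xs i - xs j)^2 + norm (us i - us j)^2"
    have "m \<le> (m + inverse (real (Suc i)) + (m + inverse (real (Suc j))))/2 - ?D/8"
    proof (rule m_le, unfold T_def, intro CollectI exI ballI)
      fix g assume g: "g\<in>G"
      show "Qf g ((1-1/2)*\<^sub>R xs i + (1/2)*\<^sub>R xs j) ((1-1/2)*\<^sub>R us i + (1/2)*\<^sub>R us j)
          \<le> (m + inverse (real (Suc i)) + (m + inverse (real (Suc j))))/2 - ?D/8"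
        using Qf_comb[of g "1/2" "xs i" "xs j" "us i" "us j"] seq[OF g, of i] seq[OF g, of j] by simp
    qed
    then show ?thesis by argo
  qed
  have "Cauchy xs" by (rule cauchy_helper) (use D in \<open>smt (verit) zero_le_power2\<close>)
  then obtain x0 where lx: "xs \<longlonglongrightarrow> x0" using Cauchy_convergent_iff convergent_def by blast
  have "Cauchy us" by (rule cauchy_helper) (use D in \<open>smt (verit) zero_le_power2\<close>)
  then obtain u0 where lu: "us \<longlonglongrightarrow> u0" using Cauchy_convergent_iff convergent_def by blast
  have lim_le: "Qf g x0 u0 \<le> m" if g: "g\<in>G" for g
  proof -
    have "(\<lambda>k. Qf g (xs k) (us k)) \<longlonglongrightarrow> Qf g x0 u0" unfolding Qf_def
      by (intro tendsto_intros lx lu) simp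
    moreover have "(\<lambda>k. m + inverse (real (Suc k))) \<longlonglongrightarrow> m"
      using tendsto_add[OF tendsto_const LIMSEQ_inverse_real_of_nat, of m] by simp
    ultimately show ?thesis using seq[OF g] by (intro LIMSEQ_le) auto
  qed
  have key: "(y - (-u0)) \<bullet> (v - (-x0)) \<ge> m + norm (x0+u0)^2/2" if yv: "(y,v)\<in>G" for y v
  proof -
    let ?D = "norm(x0-y)^2+norm(u0-v)^2"
    have S: "m \<le> norm(y+v)^2/2 - (1-s)*?D/2" if s: "0<s" "s<1" for s
    proof -
      have "m \<le> (1-s)*m + s*(norm(y+v)^2/2) - s*(1-s)*?D/2"
      proof (rule m_le, unfold T_def, intro CollectI exI ballI)
        fix g assume g: "g\<in>G"
        have "(1-s) * Qf g x0 u0 \<le> (1-s)*m" using lim_le[OF g] s by (intro mult_left_mono) auto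
        moreover have "s * Qf g y v \<le> s*(norm(y+v)^2/2)" using upper[OF g yv] s by (intro mult_left_mono) auto
        ultimately show "Qf g ((1-s)*\<^sub>R x0 + s*\<^sub>R y) ((1-s)*\<^sub>R u0 + s*\<^sub>R v)
            \<le> (1-s)*m + s*(norm(y+v)^2/2) - s*(1-s)*?D/2"
          using Qf_comb[of g s x0 y u0 v] by linarith
      qed
      then have "s*m \<le> s*(norm(y+v)^2/2 - (1-s)*?D/2)" by (simp add: algebra_simps)
      then show ?thesis using s by (simp add: mult_le_cancel_left_pos)
    qed
    have "m \<le> norm(y+v)^2/2 - (1-0)*?D/2"
    proof (rule LIMSEQ_le_const)
      show "(\<lambda>k. norm(y+v)^2/2 - (1 - inverse (real (Suc (Suc k))))*?D/2) \<longlonglongrightarrow> norm(y+v)^2/2 - (1-0)*?D/2"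
        by (intro tendsto_intros LIMSEQ_inverse_real_of_nat[THEN LIMSEQ_Suc]) simp
      show "\<exists>N. \<forall>n\<ge>N. m \<le> norm(y+v)^2/2 - (1 - inverse (real (Suc (Suc n))))*?D/2"
      proof (intro exI[of _ 0] allI impI S)
        fix n :: nat
        show "0 < inverse (real (Suc (Suc n)))" by simp
        show "inverse (real (Suc (Suc n))) < 1" by (rule inverse_less_1_iff[THEN iffD2]) simp
      qed
    qed
    then have "m \<le> norm(y+v)^2/2 - ?D/2" by simp
    moreover have "(y - -u0) \<bullet> (v - -x0) = (y + u0) \<bullet> (v + x0)" by simp
    ultimately show ?thesis using ident1[of y v x0 u0] by argo
  qed
  have aG: "(-u0, -x0) \<in> G"
  proof (rule maxi)
    fix y v assume "(y,v)\<in>G"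
    then have k: "(y - (-u0)) \<bullet> (v - (-x0)) \<ge> m + norm (x0+u0)^2/2" by (rule key)
    have "norm (x0+u0)^2/2 \<ge> 0" by simp
    then show "(y - (-u0)) \<bullet> (v - (-x0)) \<ge> 0" using k m_nonneg by argo
  qed
  have "(-u0 - -u0) \<bullet> (-x0 - -x0) = 0" by simp
  then have "0 \<ge> m + norm (x0+u0)^2/2" using key[OF aG] by argo
  moreover have "norm (x0+u0)^2 \<ge> 0" by simp
  ultimately have "norm (x0+u0)^2 = 0" using m_nonneg by argo
  then have "x0 + u0 = 0" by simp
  then have "-u0 + -x0 = 0" by (metis add.commute minus_add_distrib minus_zero)
  then show ?thesis using aG by blast
qed


lemma maxmono_rel:
  fixes B :: "'a::real_inner \<Rightarrow> 'a set"
  assumes mm: "maximal_monotone B"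
    and rel: "\<And>y v. v \<in> B y \<Longrightarrow> (y - a) \<bullet> (v - c) \<ge> 0"
  shows "c \<in> B a"
proof -
  define B' where "B' = B(a := insert c (B a))"
  have monoB: "monotone_setop B" using mm unfolding maximal_monotone_def by blast
  have "monotone_setop B'"
    unfolding monotone_setop_def
  proof (intro allI impI)
    fix x y u v assume u: "u \<in> B' x" and v: "v \<in> B' y"
    have r1: "(u - c) \<bullet> (x - a) \<ge> 0" if "u \<in> B x" for u x
      using rel[OF that] by (simp add: inner_commute)
    show "(u - v) \<bullet> (x - y) \<ge> 0"
    proof (cases "x = a \<and> u = c")
      case True
      show ?thesis
      proof (cases "y = a \<and> v = c")
        case True with \<open>x = a \<and> u = c\<close> show ?thesis by simp
      next
        case False
        then have "v \<in> B y" using v unfolding B'_def by (auto split: if_splits)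
        then have "(v - c) \<bullet> (y - a) \<ge> 0" by (rule r1)
        moreover have "(u - v) \<bullet> (x - y) = (v - c) \<bullet> (y - a)" using True
          by (simp add: inner_diff_left inner_diff_right algebra_simps)
        ultimately show ?thesis by simp
      qed
    next
      case False
      then have uB: "u \<in> B x" using u unfolding B'_def by (auto split: if_splits)
      show ?thesis
      proof (cases "y = a \<and> v = c")
        case True
        have "(u - c) \<bullet> (x - a) \<ge> 0" using uB by (rule r1)
        then show ?thesis using True by simp
      next
        case False
        then have "v \<in> B y" using v unfolding B'_def by (auto split: if_splits)
        then show ?thesis using monoB uB unfolding monotone_setop_def by blast
      qed
    qed
  qed
  moreover have "\<forall>x. B x \<subseteq> B' x" unfolding B'_def by auto
  ultimately have "B' = B" using mm unfolding maximal_monotone_def by blast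
  moreover have "c \<in> B' a" unfolding B'_def by simp
  ultimately show ?thesis by simp
qed

lemma minty_B:
  fixes B :: "'a::{real_inner,complete_space} \<Rightarrow> 'a set"
  assumes mm: "maximal_monotone B" and lam: "lam > 0"
  shows "\<exists>x. \<exists>b\<in>B x. x + lam *\<^sub>R b = p"
proof -
  define G where "G = {(y - p, lam *\<^sub>R v) | y v. v \<in> B y}"
  have monoB: "monotone_setop B" using mm unfolding maximal_monotone_def by blast
  have "\<exists>a c. (a,c)\<in>G \<and> a + c = 0"
  proof (rule minty_core)
    fix y v y' v' assume "(y,v)\<in>G" "(y',v')\<in>G"
    then obtain y1 v1 y2 v2 where h: "y = y1 - p" "v = lam *\<^sub>R v1" "v1 \<in> B y1"
      "y' = y2 - p" "v' = lam *\<^sub>R v2" "v2 \<in> B y2" unfolding G_def by blast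
    have "(v1 - v2) \<bullet> (y1 - y2) \<ge> 0" using monoB h unfolding monotone_setop_def by blast
    then have "0 \<le> lam * ((y1 - y2) \<bullet> (v1 - v2))" using lam by (simp add: inner_commute)
    also have "lam * ((y1 - y2) \<bullet> (v1 - v2)) = (y - y') \<bullet> (v - v')"
      using h by (simp add: inner_diff_right scaleR_diff_right[symmetric])
    finally show "(y - y') \<bullet> (v - v') \<ge> 0" .
  next
    fix a c assume rel: "\<And>y v. (y,v)\<in>G \<Longrightarrow> (y - a) \<bullet> (v - c) \<ge> 0"
    have "(1/lam) *\<^sub>R c \<in> B (a + p)"
    proof (rule maxmono_rel[OF mm])
      fix y v assume "v \<in> B y"
      then have "(y - p, lam *\<^sub>R v) \<in> G" unfolding G_def by blast
      then have "0 \<le> (y - p - a) \<bullet> (lam *\<^sub>R v - c)" by (rule rel)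
      also have "lam *\<^sub>R v - c = lam *\<^sub>R (v - (1/lam) *\<^sub>R c)" using lam by (simp add: algebra_simps)
      finally have "0 \<le> lam * ((y - p - a) \<bullet> (v - (1/lam) *\<^sub>R c))" by simp
      then have "0 \<le> (y - p - a) \<bullet> (v - (1/lam) *\<^sub>R c)" using lam by (simp add: zero_le_mult_iff)
      then show "0 \<le> (y - (a + p)) \<bullet> (v - (1/lam) *\<^sub>R c)" by (simp add: algebra_simps)
    qed
    moreover have "a = (a + p) - p" by simp
    moreover have "c = lam *\<^sub>R ((1/lam) *\<^sub>R c)" using lam by simp
    ultimately show "(a, c) \<in> G" unfolding G_def by blast
  qed
  then obtain a c where "(a,c)\<in>G" "a + c = 0" by blast
  then obtain y v where "a = y - p" "c = lam *\<^sub>R v" "v \<in> B y" unfolding G_def by blast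
  then have "y + lam *\<^sub>R v = (a + c) + p" by simp
  then have "y + lam *\<^sub>R v = p" using \<open>a + c = 0\<close> by simp
  then show ?thesis using \<open>v \<in> B y\<close> by blast
qed

lemma weak_bounded:
  fixes s :: "nat \<Rightarrow> 'a::{real_inner,complete_space}"
  assumes conv: "\<And>v. convergent (\<lambda>n. s n \<bullet> v)"
  shows "\<exists>K. \<forall>n. norm (s n) \<le> K"
proof -
  define F where "F k = (\<Inter>n. {v. \<bar>s n \<bullet> v\<bar> \<le> real k})" for k :: nat
  have clo: "closed (F k)" for k
    unfolding F_def by (intro closed_INT ballI closed_Collect_le continuous_intros)
  have cover: "\<Union>(range F) = UNIV"
  proof (rule set_eqI, rule iffI)
    fix v :: 'a
    have "Bseq (\<lambda>n. s n \<bullet> v)" using conv[of v] by (rule convergent_imp_Bseq)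
    then obtain K where K: "\<And>n. norm (s n \<bullet> v) \<le> K" unfolding Bseq_def by blast
    have "\<And>n. \<bar>s n \<bullet> v\<bar> \<le> real (nat \<lceil>K\<rceil>)"
      using K by (metis real_norm_def order_trans real_nat_ceiling_ge)
    then have "v \<in> F (nat \<lceil>K\<rceil>)" unfolding F_def by blast
    then show "v \<in> \<Union>(range F)" by blast
  qed simp
  have "\<exists>k. interior (F k) \<noteq> {}"
  proof (rule ccontr)
    assume "\<not> (\<exists>k. interior (F k) \<noteq> {})"
    then have empt: "\<And>k. interior (F k) = {}" by blast
    have "euclidean interior_of \<Union>(range F) = {}"
    proof (rule Baire_category_alt)
      show "completely_metrizable_space (euclidean :: 'a topology) \<or> locally_compact_space (euclidean :: 'a topology) \<and> regular_space (euclidean :: 'a topology)"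
        using completely_metrizable_space_euclidean by blast
      show "countable (range F)" by simp
      fix T assume "T \<in> range F"
      then show "closedin euclidean T \<and> euclidean interior_of T = {}"
        using clo empt closed_closedin by auto
    qed
    then show False using cover by simp
  qed
  then obtain k v0 where "v0 \<in> interior (F k)" by blast
  then obtain r where r: "r > 0" "ball v0 r \<subseteq> F k" using mem_interior by blast
  have v0F: "v0 \<in> F k" using r by (meson centre_in_ball subsetD)
  have "norm (s n) \<le> 4 * real k / r" for n
  proof (cases "s n = 0")
    case True then show ?thesis using r by simp
  next
    case False
    then have np: "norm (s n) > 0" by simp
    define v where "v = v0 + (r / 2 / norm (s n)) *\<^sub>R s n"
    have "dist v0 v = r/2" unfolding v_def dist_norm using np r by simp
    then have "v \<in> ball v0 r" using r by simp
    then have "v \<in> F k" using r by blast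
    then have h1: "\<bar>s n \<bullet> v\<bar> \<le> real k" unfolding F_def by blast
    have h2: "\<bar>s n \<bullet> v0\<bar> \<le> real k" using v0F unfolding F_def by blast
    have "s n \<bullet> v = s n \<bullet> v0 + (r/2) * norm (s n)"
      unfolding v_def using np by (simp add: inner_add_right power2_norm_eq_inner[symmetric] power2_eq_square)
    then have "(r/2) * norm (s n) \<le> 2 * real k" using h1 h2 by linarith
    then show ?thesis using r by (simp add: field_simps)
  qed
  then show ?thesis by blast
qed

theorem lemma3p3:
  fixes A :: "'a::{real_inner, complete_space} \<Rightarrow> 'a"
    and B :: "'a \<Rightarrow> 'a set"
    and x w z y :: "nat \<Rightarrow> 'a"
    and lam alpha beta theta mu_seq p :: "nat \<Rightarrow> real"
    and mu L :: real and zz :: 'a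
  assumes C1: "zeros_sum A B \<noteq> {}"
    and C2_A: "lipschitz_op L A" "monotone_op A"
    and C2_B: "maximal_monotone B"
    and mu: "0 < mu" "mu < 1"
    and lam1: "lam 1 > 0"
    and p_nonneg: "\<And>n. p n \<ge> 0"
    and mu_nonneg: "\<And>n. mu_seq n \<ge> 0"
    and p_sum: "summable p"
    and w_def: "\<And>n. n \<ge> 1 \<Longrightarrow> w n = x n + alpha n *\<^sub>R (x n - x (n - 1))"
    and z_def: "\<And>n. n \<ge> 1 \<Longrightarrow> z n = x n + beta n *\<^sub>R (x n - x (n - 1))"
    and y_def: "\<And>n. n \<ge> 1 \<Longrightarrow> y n \<in> resolvent (lam n) B (w n - lam n *\<^sub>R A (w n))"
    and lam_def: "\<And>n. n \<ge> 1 \<Longrightarrow> lam (Suc n) =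
        (if A (w n) \<noteq> A (y n)
         then min ((mu_seq n + mu) * norm (w n - y n) / norm (A (w n) - A (y n))) (lam n + p n)
         else lam n + p n)"
    and no_stop: "\<And>n. n \<ge> 1 \<Longrightarrow> w n \<noteq> y n"
    and x_def: "\<And>n. n \<ge> 1 \<Longrightarrow> x (Suc n) =
        (1 - theta n) *\<^sub>R z n + theta n *\<^sub>R (y n - lam n *\<^sub>R (A (y n) - A (w n)))"
    and lim_wy: "(\<lambda>n. norm (w n - y n)) \<longlonglongrightarrow> 0"
    and weak: "weakly_converges w zz"
  shows "zz \<in> zeros_sum A B"
proof -
  define M where "M = max L 1"
  have Mpos: "M > 0" unfolding M_def by simp
  define lmin where "lmin = min (lam 1) (mu / M)"
  have lmin_pos: "lmin > 0" unfolding lmin_def using lam1 mu Mpos by simp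
  have lam_lb: "lmin \<le> lam n" if n: "n \<ge> 1" for n
    using n
  proof (induction n rule: nat_induct_at_least)
    case base then show ?case unfolding lmin_def by simp
  next
    case (Suc n)
    have ge: "lam n + p n \<ge> lmin" using Suc.IH p_nonneg[of n] by linarith
    show ?case
    proof (cases "A (w n) \<noteq> A (y n)")
      case False
      then show ?thesis using lam_def[OF Suc.hyps] ge by simp
    next
      case True
      define d where "d = norm (w n - y n)"
      define a where "a = norm (A (w n) - A (y n))"
      have dpos: "d > 0" unfolding d_def using no_stop[OF Suc.hyps] by simp
      have apos: "a > 0" unfolding a_def using True by simp
      have "a \<le> L * d" unfolding a_def d_def using C2_A(1) unfolding lipschitz_op_def by blast
      also have "L * d \<le> M * d" unfolding M_def using dpos by (intro mult_right_mono) auto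
      finally have aM: "a \<le> M * d" .
      have "mu / M = (mu * d) / (M * d)" using dpos by simp
      also have "(mu * d) / (M * d) \<le> (mu * d) / a"
        using aM apos mu dpos by (intro divide_left_mono) auto
      also have "(mu * d) / a \<le> ((mu_seq n + mu) * d) / a"
        using mu_nonneg[of n] dpos apos by (intro divide_right_mono mult_right_mono) auto
      finally have q: "mu / M \<le> (mu_seq n + mu) * d / a" .
      have "lmin \<le> (mu_seq n + mu) * d / a" using q unfolding lmin_def by linarith
      then show ?thesis using lam_def[OF Suc.hyps] True ge unfolding a_def d_def by simp
    qed
  qed
  have weak_y: "(\<lambda>n. y n \<bullet> v) \<longlonglongrightarrow> zz \<bullet> v" for v
  proof -
    have w1: "(\<lambda>n. w n \<bullet> v) \<longlonglongrightarrow> zz \<bullet> v" using weak unfolding weakly_converges_def by blast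
    have "(\<lambda>n. (w n - y n) \<bullet> v) \<longlonglongrightarrow> 0"
    proof (rule Lim_null_comparison)
      show "\<forall>\<^sub>F n in sequentially. norm ((w n - y n) \<bullet> v) \<le> norm (w n - y n) * norm v"
        by (simp add: Cauchy_Schwarz_ineq2)
      show "(\<lambda>n. norm (w n - y n) * norm v) \<longlonglongrightarrow> 0"
        using tendsto_mult[OF lim_wy tendsto_const[of "norm v"]] by simp
    qed
    then have "(\<lambda>n. w n \<bullet> v - (w n - y n) \<bullet> v) \<longlonglongrightarrow> zz \<bullet> v - 0"
      by (intro tendsto_diff w1)
    then show ?thesis by (simp add: inner_diff_left)
  qed
  obtain Kw where Kw: "\<And>n. norm (w n) \<le> Kw"
  proof -
    have "\<exists>K. \<forall>n. norm (w n) \<le> K"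
    proof (rule weak_bounded)
      fix v show "convergent (\<lambda>n. w n \<bullet> v)"
        using weak unfolding weakly_converges_def convergent_def by blast
    qed
    then show ?thesis using that by blast
  qed
  have "\<forall>n. \<exists>bn. n \<ge> 1 \<longrightarrow> bn \<in> B (y n) \<and> w n - lam n *\<^sub>R A (w n) = y n + lam n *\<^sub>R bn"
    using y_def unfolding resolvent_def by blast
  then obtain bs where bs: "\<And>n. n \<ge> 1 \<Longrightarrow> bs n \<in> B (y n)"
    and bs_eq: "\<And>n. n \<ge> 1 \<Longrightarrow> w n - lam n *\<^sub>R A (w n) = y n + lam n *\<^sub>R bs n"
    by metis
  have monoB: "monotone_setop B" using C2_B unfolding maximal_monotone_def by blast
  define c where "c n = bs n + A (y n)" for n
  have c_eq: "c n = (1 / lam n) *\<^sub>R (w n - y n) - (A (w n) - A (y n))" if n: "n \<ge> 1" for n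
  proof -
    have lp: "lam n > 0" using lam_lb[OF n] lmin_pos by linarith
    have "lam n *\<^sub>R bs n = w n - y n - lam n *\<^sub>R A (w n)" using bs_eq[OF n] by (simp add: algebra_simps)
    then have "bs n = (1 / lam n) *\<^sub>R (w n - y n - lam n *\<^sub>R A (w n))" using lp
      by (metis divide_inverse_commute divide_self_if less_irrefl mult_1 scaleR_one scaleR_scaleR)
    then show ?thesis unfolding c_def using lp by (simp add: algebra_simps)
  qed
  have c_bound: "norm (c n) \<le> (1 / lmin + L) * norm (w n - y n)" if n: "n \<ge> 1" for n
  proof -
    have lp: "lam n > 0" using lam_lb[OF n] lmin_pos by linarith
    have "norm (c n) \<le> norm ((1 / lam n) *\<^sub>R (w n - y n)) + norm (A (w n) - A (y n))"
      unfolding c_eq[OF n] by (rule norm_triangle_ineq4)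
    also have "norm ((1 / lam n) *\<^sub>R (w n - y n)) = (1 / lam n) * norm (w n - y n)" using lp by simp
    also have "(1 / lam n) * norm (w n - y n) \<le> (1 / lmin) * norm (w n - y n)"
      using lam_lb[OF n] lmin_pos by (intro mult_right_mono) (auto simp: frac_le)
    also have "norm (A (w n) - A (y n)) \<le> L * norm (w n - y n)"
      using C2_A(1) unfolding lipschitz_op_def by blast
    finally show ?thesis by (simp add: algebra_simps)
  qed
  have ineq: "0 \<le> (b + A u) \<bullet> (u - zz)" if bu: "b \<in> B u" for b u
  proof -
    have step: "c n \<bullet> (u - y n) \<le> (b + A u) \<bullet> (u - y n)" if n: "n \<ge> 1" for n
    proof -
      have "(b - bs n) \<bullet> (u - y n) \<ge> 0" using monoB bu bs[OF n] unfolding monotone_setop_def by blast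
      moreover have "(A u - A (y n)) \<bullet> (u - y n) \<ge> 0" using C2_A(2) unfolding monotone_op_def by blast
      ultimately have "0 \<le> (b - bs n) \<bullet> (u - y n) + (A u - A (y n)) \<bullet> (u - y n)" by simp
      also have "\<dots> = (b + A u) \<bullet> (u - y n) - c n \<bullet> (u - y n)"
        unfolding c_def by (simp add: inner_diff_left inner_add_left)
      finally show ?thesis by simp
    qed
    have lim_c: "(\<lambda>n. c n \<bullet> (u - y n)) \<longlonglongrightarrow> 0"
    proof (rule Lim_null_comparison)
      define g where "g n = (1 / lmin + L) * norm (w n - y n) * (norm u + Kw + norm (w n - y n))" for n
      show "(g \<longlongrightarrow> 0) sequentially"
      proof -
        have "g \<longlonglongrightarrow> (1 / lmin + L) * 0 * (norm u + Kw + 0)"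
          unfolding g_def by (intro tendsto_intros lim_wy)
        then show ?thesis by simp
      qed
      show "\<forall>\<^sub>F n in sequentially. norm (c n \<bullet> (u - y n)) \<le> g n"
        unfolding eventually_sequentially
      proof (intro exI[of _ 1] allI impI)
        fix n :: nat assume n: "n \<ge> 1"
        have nc: "0 \<le> norm (c n)" by simp
        have "norm (u - y n) \<le> norm u + norm (y n)" by (rule norm_triangle_ineq4)
        also have "norm (y n) \<le> norm (w n) + norm (w n - y n)"
          using norm_triangle_ineq4[of "w n" "w n - y n"] by simp
        finally have uy: "norm (u - y n) \<le> norm u + Kw + norm (w n - y n)" using Kw[of n] by linarith
        have "norm (c n \<bullet> (u - y n)) \<le> norm (c n) * norm (u - y n)"
          by (simp add: Cauchy_Schwarz_ineq2)
        also have "\<dots> \<le> norm (c n) * (norm u + Kw + norm (w n - y n))"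
          using uy by (intro mult_left_mono) auto
        also have "\<dots> \<le> (1 / lmin + L) * norm (w n - y n) * (norm u + Kw + norm (w n - y n))"
          using c_bound[OF n] uy by (intro mult_right_mono) (auto intro: order_trans[OF norm_ge_zero])
        finally show "norm (c n \<bullet> (u - y n)) \<le> g n" unfolding g_def .
      qed
    qed
    have lim_r: "(\<lambda>n. (b + A u) \<bullet> (u - y n)) \<longlonglongrightarrow> (b + A u) \<bullet> (u - zz)"
    proof -
      have wy: "(\<lambda>n. (b + A u) \<bullet> y n) \<longlonglongrightarrow> (b + A u) \<bullet> zz"
        using weak_y[of "b + A u"] by (simp add: inner_commute)
      have "(\<lambda>n. (b + A u) \<bullet> u - (b + A u) \<bullet> y n) \<longlonglongrightarrow> (b + A u) \<bullet> u - (b + A u) \<bullet> zz"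
        by (intro tendsto_diff tendsto_const wy)
      then show ?thesis by (simp only: inner_diff_right)
    qed
    show ?thesis
      by (rule LIMSEQ_le[OF lim_c lim_r]) (use step in auto)
  qed
  define l0 where "l0 = 1 / (2 * (\<bar>L\<bar> + 1))"
  have l0pos: "l0 > 0" unfolding l0_def by (simp add: add_pos_nonneg)
  have l0L: "l0 * L \<le> 1/2" unfolding l0_def by (simp add: field_simps)
  define J where "J p = (SOME x. \<exists>b\<in>B x. x + l0 *\<^sub>R b = p)" for p
  have JP: "\<exists>b\<in>B (J p). J p + l0 *\<^sub>R b = p" for p
    unfolding J_def by (rule someI_ex) (rule minty_B[OF C2_B l0pos])
  have nonexp: "norm (J p - J q) \<le> norm (p - q)" for p q
  proof -
    obtain b1 where b1: "b1 \<in> B (J p)" "J p + l0 *\<^sub>R b1 = p" using JP by blast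
    obtain b2 where b2: "b2 \<in> B (J q)" "J q + l0 *\<^sub>R b2 = q" using JP by blast
    define d where "d = J p - J q"
    have m: "(b1 - b2) \<bullet> d \<ge> 0" using monoB b1 b2 unfolding monotone_setop_def d_def by blast
    have "p - q = d + l0 *\<^sub>R (b1 - b2)" using b1 b2 unfolding d_def by (auto simp: algebra_simps)
    then have "(p - q) \<bullet> d = norm d ^ 2 + l0 * ((b1 - b2) \<bullet> d)"
      by (simp add: inner_add_left power2_norm_eq_inner)
    moreover have "l0 * ((b1 - b2) \<bullet> d) \<ge> 0" using m l0pos by simp
    moreover have "(p - q) \<bullet> d \<le> norm (p - q) * norm d" by (rule Cauchy_Schwarz_ineq2[THEN order_trans[OF abs_ge_self]])
    ultimately have "norm d * norm d \<le> norm (p - q) * norm d" by (simp add: power2_eq_square)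
    then show ?thesis unfolding d_def[symmetric]
      by (cases "norm d = 0") (auto simp: mult_le_cancel_right)
  qed
  define f where "f u = J (zz - l0 *\<^sub>R A u)" for u
  have "\<exists>!u. f u = u"
  proof (rule banach_fix_type[of "1/2"])
    show "\<forall>u v. dist (f u) (f v) \<le> 1/2 * dist u v"
    proof (intro allI)
      fix u v
      have "dist (f u) (f v) \<le> norm ((zz - l0 *\<^sub>R A u) - (zz - l0 *\<^sub>R A v))"
        unfolding f_def dist_norm by (rule nonexp)
      also have "\<dots> = l0 * norm (A u - A v)" using l0pos
        by (simp add: scaleR_diff_right[symmetric] norm_minus_commute)
      also have "\<dots> \<le> l0 * (L * norm (u - v))"
        using C2_A(1) l0pos unfolding lipschitz_op_def by (intro mult_left_mono) auto
      also have "\<dots> = (l0 * L) * norm (u - v)" by simp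
      also have "\<dots> \<le> 1/2 * norm (u - v)" using l0L by (intro mult_right_mono) auto
      finally show "dist (f u) (f v) \<le> 1/2 * dist u v" by (simp add: dist_norm)
    qed
  qed auto
  then obtain us where us: "f us = us" by blast
  obtain bst where bst: "bst \<in> B us" "us + l0 *\<^sub>R bst = zz - l0 *\<^sub>R A us"
    using JP[of "zz - l0 *\<^sub>R A us"] us unfolding f_def by auto
  have e1: "l0 *\<^sub>R (bst + A us) = zz - us" using bst(2) by (simp add: algebra_simps)
  have "0 \<le> (bst + A us) \<bullet> (us - zz)" by (rule ineq[OF bst(1)])
  then have "0 \<le> l0 * ((bst + A us) \<bullet> (us - zz))" using l0pos by simp
  also have "l0 * ((bst + A us) \<bullet> (us - zz)) = (zz - us) \<bullet> (us - zz)"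
    using e1 by (metis inner_scaleR_left)
  also have "\<dots> = - (norm (us - zz) ^ 2)"
    by (simp add: power2_norm_eq_inner inner_commute inner_diff_left inner_diff_right)
  finally have "norm (us - zz) = 0" by simp
  then have uz: "us = zz" by simp
  then have "l0 *\<^sub>R (bst + A zz) = 0" using e1 by simp
  then have "A zz + bst = 0" using l0pos by (simp add: add.commute)
  then show ?thesis unfolding zeros_sum_def using bst(1) uz by blast
qed

end
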